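(* For the $N$-relay 1-2-1 diamond network with relays operating in HD, the linear program $\mathrm{P1^d}$ with $\mathsf C_p=\frac{\ell_{p,0}\ell_{N+1,p}}{\ell_{p,0}+\ell_{N+1,p}}$ has an optimal solution $(x_1,\dots,x_N)$ with at most $3$ indices $p$ such that $x_p>0$. Hence the HD approximate capacity $\mathsf{C}_{\rm cs,iid}$ is achieved by activating at most three relays, independently of $N$.
   Context: Diamond network: nodes $[0:N+1]$, source $0$, destination $N+1$, relays $[1:N]$; the only links are $(0,p)$ and $(p,N+1)$ for $p\in[1:N]$, with positive capacities $\ell_{p,0}$ and $\ell_{N+1,p}$. $\mathrm{P1^d}$ is the linear program $\max\sum_{p=1}^N x_p\mathsf C_p$ subject to $0\le x_p\le1$ for all $p\in[1:N]$, $\sum_{p=1}^N x_p\mathsf C_p/\ell_{p,0}\le1$, and $\sum_{p=1}^N x_p\mathsf C_p/\ell_{N+1,p}\le1$. In the HD case (with the HD $\mathsf C_p$ above) its optimal value equals $\mathsf{C}_{\rm cs,iid}$, the HD approximate capacity $\max_\lambda\min_\Omega\sum_{i\in\Omega,j\in\Omega^c}(\sum_{s:\,(i,j)\text{ active in }s}\lambda_s)\ell_{j,i}$ over probability vectors on HD beam states and cuts $0\in\Omega\subseteq[0:N]$. *)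

theory Defs
  imports Main "HOL.Real"
begin

text \<open>Diamond network with relays 1..N. l0 p = capacity of link (0,p),
  l1 p = capacity of link (p,N+1).  HD single-relay capacity C_p.\<close>

definition Cp :: "real \<Rightarrow> real \<Rightarrow> real" where
  "Cp a b = a * b / (a + b)"

definition C_hd :: "(nat \<Rightarrow> real) \<Rightarrow> (nat \<Rightarrow> real) \<Rightarrow> nat \<Rightarrow> real" where
  "C_hd l0 l1 p = Cp (l0 p) (l1 p)"

definition P1d_feasible ::
  "nat \<Rightarrow> (nat \<Rightarrow> real) \<Rightarrow> (nat \<Rightarrow> real) \<Rightarrow> (nat \<Rightarrow> real) \<Rightarrow> bool" where
  "P1d_feasible N l0 l1 x \<longleftrightarrow>
     (\<forall>p\<in>{1..N}. 0 \<le> x p \<and> x p \<le> 1) \<and>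
     (\<Sum>p=1..N. x p * C_hd l0 l1 p / l0 p) \<le> 1 \<and>
     (\<Sum>p=1..N. x p * C_hd l0 l1 p / l1 p) \<le> 1"

definition P1d_obj ::
  "nat \<Rightarrow> (nat \<Rightarrow> real) \<Rightarrow> (nat \<Rightarrow> real) \<Rightarrow> (nat \<Rightarrow> real) \<Rightarrow> real" where
  "P1d_obj N l0 l1 x = (\<Sum>p=1..N. x p * C_hd l0 l1 p)"

definition P1d_optimal ::
  "nat \<Rightarrow> (nat \<Rightarrow> real) \<Rightarrow> (nat \<Rightarrow> real) \<Rightarrow> (nat \<Rightarrow> real) \<Rightarrow> bool" where
  "P1d_optimal N l0 l1 x \<longleftrightarrow> P1d_feasible N l0 l1 x \<and>
     (\<forall>y. P1d_feasible N l0 l1 y \<longrightarrow> P1d_obj N l0 l1 y \<le> P1d_obj N l0 l1 x)"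

end

theory Submission
  imports Defs "HOL-Analysis.Analysis"
begin

lemma cpt_PiE: "compact (PiE UNIV (S :: nat \<Rightarrow> real set))" if "\<And>i. compact (S i)"
proof -
  have "compactin (product_topology (\<lambda>i. euclidean) UNIV) (PiE UNIV S)"
    using that by (simp add: compactin_PiE)
  then show ?thesis by (simp add: euclidean_product_topology)
qed

lemma cont1: "continuous_on UNIV (\<lambda>x::nat\<Rightarrow>real. \<Sum>p\<in>A. x p * c p)"
  by (intro continuous_intros continuous_on_product_coordinates)
lemma cont2: "continuous_on UNIV (\<lambda>x::nat\<Rightarrow>real. \<Sum>p\<in>A. x p * c p / e p)"
  unfolding divide_inverse by (intro continuous_intros continuous_on_product_coordinates)
lemma cont3: "continuous_on UNIV (\<lambda>x::nat\<Rightarrow>real. \<Sum>p\<in>A. (x p)^2)"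
  by (intro continuous_intros continuous_on_product_coordinates)

lemma s3: "finite A \<Longrightarrow> i \<in> A \<Longrightarrow> j \<in> A \<Longrightarrow> k \<in> A \<Longrightarrow> i \<noteq> j \<Longrightarrow> i \<noteq> k \<Longrightarrow> j \<noteq> k \<Longrightarrow>
  (\<Sum>p\<in>A. (if p=i then a else if p=j then b else if p=k then c else 0) * (g p::real)) = a * g i + b * g j + c * g k"
proof -
  assume h: "finite A" "i \<in> A" "j \<in> A" "k \<in> A" "i \<noteq> j" "i \<noteq> k" "j \<noteq> k"
  have "(\<Sum>p\<in>A. (if p=i then a else if p=j then b else if p=k then c else 0) * (g p::real))
     = (\<Sum>p\<in>A. (if p=i then a * g p else 0) + (if p=j then b * g p else 0) + (if p = k then c * g p else 0))"
    by (rule sum.cong) (use h in auto)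
  also have "\<dots> = a * g i + b * g j + c * g k" using h by (simp add: sum.distrib)
  finally show ?thesis .
qed

lemma dir: "\<exists>da db dc::real. da+db+dc=0 \<and> da*a+db*b+dc*c=0 \<and> (da\<noteq>0 \<or> db\<noteq>0 \<or> dc\<noteq>0)"
proof (cases "a = b \<and> b = c")
  case True
  then show ?thesis by (intro exI[of _ 1] exI[of _ "-1"] exI[of _ 0]) auto
next
  case False
  then show ?thesis by (intro exI[of _ "c-b"] exI[of _ "a-c"] exI[of _ "b-a"]) (auto simp: algebra_simps)
qed

lemma lin: "(\<Sum>p\<in>A. (x p + e * d p) * g p / h p) = (\<Sum>p\<in>A. x p * g p / h p) + e * (\<Sum>p\<in>A. d p * (g p / h p :: real))"
  by (simp add: sum.distrib sum_distrib_left algebra_simps add_divide_distrib)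

lemma lin0: "(\<Sum>p\<in>A. (x p + e * d p) * g p) = (\<Sum>p\<in>A. x p * g p) + e * (\<Sum>p\<in>A. d p * (g p :: real))"
  by (simp add: sum.distrib sum_distrib_left algebra_simps)

lemma sq2: "(\<Sum>p\<in>A. (x p + e * d p)^2) + (\<Sum>p\<in>A. (x p + (- e) * d p)^2) = 2 * (\<Sum>p\<in>A. (x p)^2) + 2 * e^2 * (\<Sum>p\<in>A. d p * (d p :: real))"
  by (simp add: sum.distrib[symmetric] sum_distrib_left power2_eq_square algebra_simps)

theorem lemma5:
  fixes N :: nat and l0 l1 :: "nat \<Rightarrow> real"
  assumes "\<forall>p\<in>{1..N}. l0 p > 0 \<and> l1 p > 0"
  shows "\<exists>x. P1d_optimal N l0 l1 x \<and> card {p\<in>{1..N}. x p > 0} \<le> 3"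
proof -
  define I where "I = {1..N}"
  have finI: "finite I" by (simp add: I_def)
  define C where "C = C_hd l0 l1"
  define w where "w p = C p / l0 p" for p
  define w' where "w' p = C p / l1 p" for p
  have ww: "w p + w' p = 1" if "p \<in> I" for p
  proof -
    have a: "l0 p > 0" "l1 p > 0" using assms that by (auto simp: I_def)
    have "l0 p * l1 p / (l0 p + l1 p) / l0 p = l1 p / (l0 p + l1 p)" using a by simp
    moreover have "l0 p * l1 p / (l0 p + l1 p) / l1 p = l0 p / (l0 p + l1 p)" using a by simp
    moreover have "l1 p / (l0 p + l1 p) + l0 p / (l0 p + l1 p) = 1" using a
      by (simp add: add_divide_distrib[symmetric])
    ultimately show ?thesis unfolding w_def w'_def C_def C_hd_def Cp_def by simp
  qed
  define S where "S p = (if p \<in> I then {0..1} else {0::real})" for p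
  define obj where "obj x = (\<Sum>p\<in>I. x p * C p)" for x :: "nat \<Rightarrow> real"
  define f where "f x = (\<Sum>p\<in>I. (x p)^2)" for x :: "nat \<Rightarrow> real"
  define K where "K = PiE UNIV S \<inter> {x. (\<Sum>p\<in>I. x p * C p / l0 p) \<le> 1} \<inter> {x. (\<Sum>p\<in>I. x p * C p / l1 p) \<le> 1}"
  have Kiff: "x \<in> K \<longleftrightarrow> (\<forall>p. x p \<in> S p) \<and> (\<Sum>p\<in>I. x p * C p / l0 p) \<le> 1 \<and> (\<Sum>p\<in>I. x p * C p / l1 p) \<le> 1" for x
    by (simp add: K_def PiE_iff)
  have cK: "compact K"
  proof -
    have "compact (PiE UNIV S)" by (rule cpt_PiE) (simp add: S_def)
    moreover have "closed {x::nat\<Rightarrow>real. (\<Sum>p\<in>I. x p * C p / l0 p) \<le> 1}"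
      by (rule closed_Collect_le) (simp_all add: cont2)
    moreover have "closed {x::nat\<Rightarrow>real. (\<Sum>p\<in>I. x p * C p / l1 p) \<le> 1}"
      by (rule closed_Collect_le) (simp_all add: cont2)
    ultimately show ?thesis unfolding K_def Int_assoc
      by (intro compact_Int_closed closed_Int) auto
  qed
  have "(\<lambda>_. 0) \<in> K" by (simp add: Kiff S_def)
  moreover have "continuous_on K obj"
    unfolding obj_def by (rule continuous_on_subset[OF cont1]) simp
  ultimately have "\<exists>x\<in>K. \<forall>y\<in>K. obj y \<le> obj x"
    using continuous_attains_sup[OF cK, of obj] by blast
  then obtain x0 where x0: "x0 \<in> K" "\<And>y. y \<in> K \<Longrightarrow> obj y \<le> obj x0"
    by blast
  define M where "M = obj x0"
  define Opt where "Opt = K \<inter> {x. M \<le> obj x}"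
  have cO: "compact Opt" unfolding Opt_def
    by (intro compact_Int_closed cK closed_Collect_le) (simp_all add: obj_def cont1)
  have "x0 \<in> Opt" using x0 by (simp add: Opt_def M_def)
  moreover have "continuous_on Opt f"
    unfolding f_def by (rule continuous_on_subset[OF cont3]) simp
  ultimately have "\<exists>x\<in>Opt. \<forall>y\<in>Opt. f y \<le> f x"
    using continuous_attains_sup[OF cO, of f] by blast
  then obtain x where xO: "x \<in> Opt" and xmax: "\<And>y. y \<in> Opt \<Longrightarrow> f y \<le> f x"
    by blast
  have xK: "x \<in> K" and xM: "obj x = M" using xO x0(2) by (auto simp: Opt_def M_def intro: antisym)
  have xS: "\<And>p. x p \<in> S p" using xK by (simp add: Kiff)
  have xb: "0 \<le> x p \<and> x p \<le> 1" if "p \<in> I" for p using xS[of p] that by (simp add: S_def)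
  have xz: "x p = 0" if "p \<notin> I" for p using xS[of p] that by (simp add: S_def)
  have feas: "P1d_feasible N l0 l1 x"
    using xK xb unfolding P1d_feasible_def Kiff by (simp add: I_def C_def)
  have opt: "P1d_optimal N l0 l1 x"
    unfolding P1d_optimal_def
  proof (intro conjI feas allI impI)
    fix y assume fy: "P1d_feasible N l0 l1 y"
    define y' where "y' p = (if p \<in> I then y p else 0)" for p
    have s1: "(\<Sum>p\<in>I. y' p * g p) = (\<Sum>p\<in>I. y p * g p)" for g :: "nat \<Rightarrow> real"
      by (rule sum.cong) (simp_all add: y'_def)
    have s2: "(\<Sum>p\<in>I. y' p * g p / h p) = (\<Sum>p\<in>I. y p * g p / h p)" for g h :: "nat \<Rightarrow> real"
      by (rule sum.cong) (simp_all add: y'_def)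
    have "y' \<in> K" using fy unfolding Kiff P1d_feasible_def s2
      by (auto simp: y'_def S_def I_def C_def)
    then have "obj y' \<le> obj x" using x0(2) xM M_def by simp
    moreover have "obj y' = obj y" unfolding obj_def by (rule s1)
    ultimately have "obj y \<le> obj x" by simp
    then show "P1d_obj N l0 l1 y \<le> P1d_obj N l0 l1 x"
      by (simp add: obj_def P1d_obj_def I_def C_def)
  qed
  define Fr where "Fr = {p\<in>I. 0 < x p \<and> x p < 1}"
  have finFr: "finite Fr" using finI by (simp add: Fr_def)
  have Fr2: "card Fr \<le> 2"
  proof (rule ccontr)
    assume "\<not> card Fr \<le> 2"
    then have "3 \<le> card Fr" by simp
    then obtain B where "B \<subseteq> Fr" "card B = 3" by (meson obtain_subset_with_card_n)
    then obtain i j k where ijk: "i \<in> Fr" "j \<in> Fr" "k \<in> Fr" "i \<noteq> j" "j \<noteq> k" "i \<noteq> k"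
      by (auto simp: card_3_iff)
    have ijkI: "i \<in> I" "j \<in> I" "k \<in> I" using ijk by (auto simp: Fr_def)
    obtain da db dc where dd: "da+db+dc=0" "da*w i+db*w j+dc*w k=0" "da\<noteq>0 \<or> db\<noteq>0 \<or> dc\<noteq>0"
      using dir by blast
    define d where "d p = (if p=i then da else if p=j then db else if p=k then dc else 0)" for p
    have sd: "(\<Sum>p\<in>I. d p * g p) = da * g i + db * g j + dc * g k" for g
      unfolding d_def using s3[OF finI ijkI] ijk by simp
    have dw: "(\<Sum>p\<in>I. d p * w p) = 0" using sd dd by simp
    have dw': "(\<Sum>p\<in>I. d p * w' p) = 0"
    proof -
      have "w' i = 1 - w i" "w' j = 1 - w j" "w' k = 1 - w k" using ww[OF ijkI(1)] ww[OF ijkI(2)] ww[OF ijkI(3)] by linarith+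
      then have "(\<Sum>p\<in>I. d p * w' p) = da*(1 - w i)+db*(1 - w j)+dc*(1 - w k)" using sd[of w'] by simp
      also have "\<dots> = (da+db+dc) - (da*w i+db*w j+dc*w k)" by (simp add: algebra_simps)
      also have "\<dots> = 0" using dd(1,2) by simp
      finally show ?thesis .
    qed
    have dpos: "(\<Sum>p\<in>I. d p * d p) > 0"
    proof -
      have "(\<Sum>p\<in>I. d p * d p) = da * da + db * db + dc * dc"
        using sd[of d] ijk by (simp add: d_def)
      also have "\<dots> > 0"
      proof -
        have "da*da \<ge> 0" "db*db \<ge> 0" "dc*dc \<ge> 0" by simp_all
        moreover have "da*da > 0 \<or> db*db > 0 \<or> dc*dc > 0" using dd(3) by (auto simp: zero_less_mult_iff)
        ultimately show ?thesis by linarith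
      qed
      finally show ?thesis .
    qed
    define m where "m = min (min (min (x i) (1 - x i)) (min (x j) (1-x j))) (min (x k) (1 - x k))"
    have mpos: "m > 0" using ijk by (simp add: m_def Fr_def)
    define B where "B = \<bar>da\<bar> + \<bar>db\<bar> + \<bar>dc\<bar> + 1"
    have Bpos: "B > 0" by (simp add: B_def add_nonneg_pos)
    define t where "t = m / B"
    have tpos: "t > 0" using mpos Bpos by (simp add: t_def)
    have dB: "\<bar>d p\<bar> \<le> B - 1" for p by (simp add: d_def B_def)
    have small: "\<bar>t * d p\<bar> < m" for p
    proof -
      have "\<bar>t * d p\<bar> = t * \<bar>d p\<bar>" using tpos by (simp add: abs_mult)
      also have "\<dots> \<le> t * (B - 1)" using dB tpos by (simp add: mult_left_mono)
      also have "\<dots> < t * B" using tpos by simp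
      also have "\<dots> = m" using Bpos by (simp add: t_def)
      finally show ?thesis .
    qed
    define y where "y s p = x p + s * t * d p" for s :: real and p
    have yK: "y s \<in> K" if s: "s = 1 \<or> s = -1" for s
    proof -
      have "y s p \<in> S p" for p
      proof (cases "p = i \<or> p = j \<or> p = k")
        case True
        then have "p \<in> I" "m \<le> x p" "m \<le> 1 - x p" using ijkI by (auto simp: m_def)
        moreover have "\<bar>s * t * d p\<bar> < m" using small[of p] s by auto
        ultimately show ?thesis by (simp add: S_def y_def abs_less_iff)
      next
        case False
        then show ?thesis using xS[of p] by (simp add: y_def d_def)
      qed
      moreover have "(\<Sum>p\<in>I. y s p * C p / l0 p) = (\<Sum>p\<in>I. x p * C p / l0 p)"
        using lin[where g=C and h=l0 and x=x and e="s*t" and d=d and A=I] dw unfolding y_def w_def by simp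
      moreover have "(\<Sum>p\<in>I. y s p * C p / l1 p) = (\<Sum>p\<in>I. x p * C p / l1 p)"
        using lin[where g=C and h=l1 and x=x and e="s*t" and d=d and A=I] dw' unfolding y_def w'_def by simp
      ultimately show ?thesis using xK by (simp add: Kiff)
    qed
    have oy: "obj (y s) = obj x + s * t * (\<Sum>p\<in>I. d p * C p)" for s
      using lin0[where g=C and x=x and e="s*t" and d=d and A=I] unfolding obj_def y_def by simp
    have o1: "obj (y 1) \<le> M" "obj (y (-1)) \<le> M" using yK x0(2) M_def by auto
    have "obj (y 1) + obj (y (-1)) = 2 * M" using oy[of 1] oy[of "-1"] xM by simp
    then have "y 1 \<in> Opt" "y (-1) \<in> Opt" using o1 yK by (auto simp: Opt_def)
    then have "f (y 1) \<le> f x" "f (y (-1)) \<le> f x" using xmax by auto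
    moreover have "f (y 1) + f (y (-1)) = 2 * f x + 2 * t^2 * (\<Sum>p\<in>I. d p * d p)"
      using sq2[where x=x and e=t and d=d and A=I] unfolding f_def y_def by simp
    moreover have "2 * t^2 * (\<Sum>p\<in>I. d p * d p) > 0" using tpos dpos by simp
    ultimately show False by linarith
  qed
  define One where "One = {p\<in>I. x p = 1}"
  have finOne: "finite One" using finI by (simp add: One_def)
  have supp: "{p\<in>{1..N}. x p > 0} = One \<union> Fr"
    using xb by (force simp: One_def Fr_def I_def order_le_less)
  have disj: "One \<inter> Fr = {}" by (auto simp: One_def Fr_def)
  have cs: "card {p\<in>{1..N}. x p > 0} = card One + card Fr"
    using supp disj finOne finFr by (simp add: card_Un_disjoint)
  have sum2: "(\<Sum>p\<in>I. x p) \<le> 2"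
  proof -
    have c: "(\<Sum>p\<in>I. x p * C p / l0 p) \<le> 1" "(\<Sum>p\<in>I. x p * C p / l1 p) \<le> 1" using xK by (simp_all add: Kiff)
    have "(\<Sum>p\<in>I. x p) = (\<Sum>p\<in>I. x p * C p / l0 p + x p * C p / l1 p)"
    proof (rule sum.cong)
      fix p assume "p \<in> I"
      then have "x p * (w p + w' p) = x p" using ww by simp
      then show "x p = x p * C p / l0 p + x p * C p / l1 p" by (simp add: w_def w'_def algebra_simps)
    qed simp
    also have "\<dots> \<le> 2" using c by (simp add: sum.distrib)
    finally show ?thesis .
  qed
  have sOF: "(\<Sum>p\<in>One \<union> Fr. x p) \<le> (\<Sum>p\<in>I. x p)"
    by (rule sum_mono2[OF finI]) (auto simp: One_def Fr_def xb)
  have "(\<Sum>p\<in>One \<union> Fr. x p) = real (card One) + (\<Sum>p\<in>Fr. x p)"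
    using disj finOne finFr by (simp add: sum.union_disjoint One_def)
  then have key: "real (card One) + (\<Sum>p\<in>Fr. x p) \<le> 2" using sOF sum2 by simp
  have Frnn: "(\<Sum>p\<in>Fr. x p) \<ge> 0" by (rule sum_nonneg) (simp add: Fr_def)
  have "card {p\<in>{1..N}. x p > 0} \<le> 3"
  proof (cases "Fr = {}")
    case True
    then show ?thesis using key cs by simp
  next
    case False
    then have "(\<Sum>p\<in>Fr. x p) > 0" using finFr by (intro sum_pos) (auto simp: Fr_def)
    then have "card One \<le> 1" using key by simp
    then show ?thesis using cs Fr2 by simp
  qed
  then show ?thesis using opt by blast
qed

end
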